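(* Let $G$ and $H$ be finite AC-groups such that $B_G(t)=B_H(t)$. Then $k(G)=k(H)$, where $k(\cdot)$ denotes the number of conjugacy classes.
   Context: A finite group $G$ is an AC-group if the centralizer of every non-central element is abelian. For a finite group $G$ and $n\ge0$, let $G^{(n)}\subseteq G^n$ be the set of $n$-tuples of pairwise commuting elements, on which $G$ acts by simultaneous conjugation; let $\beta_{G,n}$ be the number of orbits and $B_G(t)=\sum_{n\ge0}\beta_{G,n}t^n$. *)

theory Defs
  imports "HOL-Algebra.Group_Action" "HOL-Computational_Algebra.Formal_Power_Series"
begin

definition grp_center :: "('a, 'b) monoid_scheme \<Rightarrow> 'a set" where
  "grp_center G = {z \<in> carrier G. \<forall>x \<in> carrier G. z \<otimes>\<^bsub>G\<^esub> x = x \<otimes>\<^bsub>G\<^esub> z}"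

definition grp_centralizer :: "('a, 'b) monoid_scheme \<Rightarrow> 'a \<Rightarrow> 'a set" where
  "grp_centralizer G x = {y \<in> carrier G. y \<otimes>\<^bsub>G\<^esub> x = x \<otimes>\<^bsub>G\<^esub> y}"

definition AC_group :: "('a, 'b) monoid_scheme \<Rightarrow> bool" where
  "AC_group G \<longleftrightarrow> group G \<and>
     (\<forall>x \<in> carrier G. x \<notin> grp_center G \<longrightarrow>
        (\<forall>y \<in> grp_centralizer G x. \<forall>z \<in> grp_centralizer G x.
           y \<otimes>\<^bsub>G\<^esub> z = z \<otimes>\<^bsub>G\<^esub> y))"

definition conj_act :: "('a, 'b) monoid_scheme \<Rightarrow> 'a \<Rightarrow> 'a \<Rightarrow> 'a" where
  "conj_act G g x = g \<otimes>\<^bsub>G\<^esub> x \<otimes>\<^bsub>G\<^esub> inv\<^bsub>G\<^esub> g"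

definition commuting_tuples :: "('a, 'b) monoid_scheme \<Rightarrow> nat \<Rightarrow> 'a list set" where
  "commuting_tuples G n = {xs. length xs = n \<and> set xs \<subseteq> carrier G \<and>
      (\<forall>i < n. \<forall>j < n. xs ! i \<otimes>\<^bsub>G\<^esub> xs ! j = xs ! j \<otimes>\<^bsub>G\<^esub> xs ! i)}"

definition beta :: "('a, 'b) monoid_scheme \<Rightarrow> nat \<Rightarrow> nat" where
  "beta G n = card (orbits G (commuting_tuples G n) (\<lambda>g xs. map (conj_act G g) xs))"

definition B_series :: "('a, 'b) monoid_scheme \<Rightarrow> int fps" where
  "B_series G = Abs_fps (\<lambda>n. int (beta G n))"

definition num_conj_classes :: "('a, 'b) monoid_scheme \<Rightarrow> nat" where
  "num_conj_classes G = card (orbits G (carrier G) (conj_act G))"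

end

theory Submission
  imports Defs
begin

lemma ct1: "commuting_tuples G 1 = (\<lambda>x. [x]) ` carrier G"
proof
  show "commuting_tuples G 1 \<subseteq> (\<lambda>x. [x]) ` carrier G"
  proof
    fix xs assume "xs \<in> commuting_tuples G 1"
    then have l: "length xs = 1" and s: "set xs \<subseteq> carrier G"
      unfolding commuting_tuples_def by blast+
    then obtain x where "xs = [x]" by (cases xs) auto
    with s show "xs \<in> (\<lambda>x. [x]) ` carrier G" by simp
  qed
next
  show "(\<lambda>x. [x]) ` carrier G \<subseteq> commuting_tuples G 1"
    unfolding commuting_tuples_def by clarsimp
qed

lemma orb1: "orbit G (\<lambda>g xs. map (conj_act G g) xs) [x] = (\<lambda>y. [y]) ` orbit G (conj_act G) x"
  unfolding orbit_def image_Collect by (rule Collect_cong) (simp, blast?)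

lemma beta1: "beta G 1 = num_conj_classes G"
proof -
  have e: "orbits G (commuting_tuples G 1) (\<lambda>g xs. map (conj_act G g) xs)
      = (\<lambda>S. (\<lambda>y. [y]) ` S) ` orbits G (carrier G) (conj_act G)" (is "?L = ?R")
  proof
    show "?L \<subseteq> ?R"
    proof
      fix Y assume "Y \<in> ?L"
      then obtain x where x: "x \<in> carrier G" "Y = orbit G (\<lambda>g xs. map (conj_act G g) xs) [x]"
        unfolding ct1 orbits_def by blast
      then show "Y \<in> ?R" unfolding orb1 orbits_def by blast
    qed
  next
    show "?R \<subseteq> ?L"
    proof
      fix Y assume "Y \<in> ?R"
      then obtain x where x: "x \<in> carrier G" "Y = (\<lambda>y. [y]) ` orbit G (conj_act G) x"
        unfolding orbits_def by blast
      then have "Y = orbit G (\<lambda>g xs. map (conj_act G g) xs) [x]" by (simp add: orb1)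
      with x show "Y \<in> ?L" unfolding ct1 orbits_def by blast
    qed
  qed
  have "inj (\<lambda>S. (\<lambda>y. [y]) ` S)"
    by (rule injI) (simp add: inj_image_eq_iff inj_def)
  then show ?thesis
    unfolding beta_def num_conj_classes_def e
    by (metis card_image inj_on_subset subset_UNIV)
qed

theorem lemma6p4:
  fixes G :: "('a, 'c) monoid_scheme" and H :: "('b, 'd) monoid_scheme"
  assumes "group G" and "finite (carrier G)" and "AC_group G"
      and "group H" and "finite (carrier H)" and "AC_group H"
      and "B_series G = B_series H"
  shows "num_conj_classes G = num_conj_classes H"
proof -
  have "fps_nth (B_series G) 1 = fps_nth (B_series H) 1" using assms(7) by simp
  then have "beta G 1 = beta H 1" by (simp add: B_series_def)
  then show ?thesis by (metis beta1)
qed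

end
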